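(* For every dimension $d$ and integers $t\ge 2$, $k\ge 1$, $h\ge 1$ there exists an integer $m=m(t,k,h)$ (depending only on $t,k,h$) with the following property: for every finite family $\mathcal{H}$ of $h$ halfspaces in $\mathbb{R}^d$, the (unordered) $t$-tuples of every finite set of points $S\subset\mathbb{R}^d$ can be $k$-colored such that every $\mathcal{H}$-region that contains at least $m$ points of $S$ contains a $t$-tuple of points of $S$ of each of the $k$ colors.
   Context: Given a finite family of halfspaces $\mathcal{H}=\{H_1,\dots,H_h\}$ in $\mathbb{R}^d$, a region $R$ is an $\mathcal{H}$-region if it is the intersection of finitely many halfspaces, each of which is a translate of one of the halfspaces in $\mathcal{H}$. A $t$-tuple of points of $S$ is a $t$-element subset of $S$; a region contains a $t$-tuple if it contains all its points. *)

theory Defs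
  imports Complex_Main
begin

text \<open>R^d is represented explicitly (so that m can be chosen independently of d):
  points are functions nat => real vanishing outside {..<d}.\<close>

definition Rspace :: "nat \<Rightarrow> (nat \<Rightarrow> real) set" where
  "Rspace d = {x. \<forall>i\<ge>d. x i = 0}"

definition dotd :: "nat \<Rightarrow> (nat \<Rightarrow> real) \<Rightarrow> (nat \<Rightarrow> real) \<Rightarrow> real" where
  "dotd d a x = (\<Sum>i<d. a i * x i)"

definition is_halfspace :: "nat \<Rightarrow> (nat \<Rightarrow> real) set \<Rightarrow> bool" where
  "is_halfspace d H \<longleftrightarrow> (\<exists>a b. a \<in> Rspace d \<and> a \<noteq> (\<lambda>_. 0) \<and>
      H = {x \<in> Rspace d. dotd d a x \<le> b})"

definition translate :: "(nat \<Rightarrow> real) \<Rightarrow> (nat \<Rightarrow> real) set \<Rightarrow> (nat \<Rightarrow> real) set" where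
  "translate v H = (\<lambda>x i. x i + v i) ` H"

definition is_region :: "nat \<Rightarrow> nat \<Rightarrow> (nat \<Rightarrow> (nat \<Rightarrow> real) set) \<Rightarrow> (nat \<Rightarrow> real) set \<Rightarrow> bool" where
  "is_region d h Hs R \<longleftrightarrow> (\<exists>F. finite F \<and> F \<noteq> {} \<and>
      (\<forall>G\<in>F. \<exists>i<h. \<exists>v\<in>Rspace d. G = translate v (Hs i)) \<and> R = \<Inter>F)"

end

theory Submission
  imports Defs "HOL-Library.Ramsey"
begin


definition leo :: "(nat \<Rightarrow> nat \<Rightarrow> real) \<Rightarrow> nat \<Rightarrow> nat \<Rightarrow> nat \<Rightarrow> bool" where
  "leo g i r p \<longleftrightarrow> g i r < g i p \<or> (g i r = g i p \<and> r \<le> p)"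

lemma leo_trans: "leo g i a b \<Longrightarrow> leo g i b c \<Longrightarrow> leo g i a c"
  unfolding leo_def by auto

lemma leo_total: "leo g i a b \<or> leo g i b a"
  unfolding leo_def by auto

lemma leo_real: "leo g i a b \<Longrightarrow> g i a \<le> g i b"
  unfolding leo_def by auto

definition relp :: "nat \<Rightarrow> (nat \<Rightarrow> nat \<Rightarrow> real) \<Rightarrow> nat \<Rightarrow> nat \<Rightarrow> nat \<Rightarrow> bool" where
  "relp h g p r q \<longleftrightarrow> p < r \<and> r < q \<and> (\<forall>i<h. leo g i r p \<or> leo g i r q)"

lemma relp_trans: "relp h g p a b \<Longrightarrow> relp h g p b c \<Longrightarrow> relp h g p a c"
  unfolding relp_def by (meson leo_trans order.strict_trans)

definition chainq :: "nat \<Rightarrow> (nat \<Rightarrow> nat \<Rightarrow> real) \<Rightarrow> nat \<Rightarrow> nat \<Rightarrow> nat \<Rightarrow> nat set \<Rightarrow> bool" where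
  "chainq h g n p q C \<longleftrightarrow> C \<subseteq> {..<n} \<and> q \<in> C \<and> (\<forall>c\<in>C. c \<le> q) \<and>
     (\<forall>x\<in>C. \<forall>y\<in>C. x < y \<longrightarrow> relp h g p x y)"

definition ht :: "nat \<Rightarrow> (nat \<Rightarrow> nat \<Rightarrow> real) \<Rightarrow> nat \<Rightarrow> nat \<Rightarrow> nat \<Rightarrow> nat" where
  "ht h g n p q = Max (card ` {C. chainq h g n p q C})"

lemma chainq_fin: "finite {C. chainq h g n p q C}"
proof -
  have "{C. chainq h g n p q C} \<subseteq> Pow {..<n}" unfolding chainq_def by auto
  then show ?thesis by (rule finite_subset) auto
qed

lemma chainq_single: "q < n \<Longrightarrow> chainq h g n p q {q}"
  unfolding chainq_def by auto

lemma ht_ge: "chainq h g n p q C \<Longrightarrow> card C \<le> ht h g n p q"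
  unfolding ht_def using chainq_fin by (intro Max_ge) auto

lemma ht_ex: assumes "q < n" shows "\<exists>C. chainq h g n p q C \<and> card C = ht h g n p q"
proof -
  have "ht h g n p q \<in> card ` {C. chainq h g n p q C}"
    unfolding ht_def using chainq_fin[of h g n p q] chainq_single[OF assms, of h g p] by (intro Max_in) auto
  then show ?thesis by auto
qed

lemma chainq_finite: "chainq h g n p q C \<Longrightarrow> finite C"
  unfolding chainq_def by (meson finite_lessThan finite_subset)

lemma ht_pos: "q < n \<Longrightarrow> 1 \<le> ht h g n p q"
  using ht_ge[OF chainq_single, of q n h g p] by simp

lemma ht_step:
  assumes "q < n" "2 \<le> ht h g n p q"
  shows "\<exists>r. relp h g p r q \<and> r < n \<and> ht h g n p r = ht h g n p q - 1"
proof -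
  obtain C where C: "chainq h g n p q C" "card C = ht h g n p q" using ht_ex[OF assms(1)] by blast
  have finC: "finite C" using chainq_finite[OF C(1)] .
  define C' where "C' = C - {q}"
  have qC: "q \<in> C" using C(1) unfolding chainq_def by auto
  have cardC': "card C' = card C - 1" unfolding C'_def using qC finC by simp
  then have "C' \<noteq> {}" using C(2) assms(2) by auto
  have finC': "finite C'" using finC C'_def by simp
  define r where "r = Max C'"
  have rC': "r \<in> C'" unfolding r_def using finC' \<open>C' \<noteq> {}\<close> by simp
  have rle: "\<forall>c\<in>C'. c \<le> r" unfolding r_def using finC' by simp
  have rq: "r < q" using rC' C(1) unfolding C'_def chainq_def by fastforce
  have relrq: "relp h g p r q" using C(1) rC' rq qC unfolding chainq_def C'_def by blast
  have rn: "r < n" using rC' C(1) unfolding C'_def chainq_def by auto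
  have ch': "chainq h g n p r C'"
    using C(1) rC' rle unfolding chainq_def C'_def by auto
  have ge: "ht h g n p q - 1 \<le> ht h g n p r" using ht_ge[OF ch'] cardC' C(2) by simp
  obtain D where D: "chainq h g n p r D" "card D = ht h g n p r" using ht_ex[OF rn] by blast
  have finD: "finite D" using chainq_finite[OF D(1)] .
  have qD: "q \<notin> D" using D(1) rq unfolding chainq_def by force
  have "chainq h g n p q (insert q D)"
    unfolding chainq_def
  proof (intro conjI ballI impI)
    show "insert q D \<subseteq> {..<n}" using D(1) assms(1) unfolding chainq_def by auto
    show "q \<in> insert q D" by simp
    fix c assume "c \<in> insert q D"
    then show "c \<le> q" using D(1) rq unfolding chainq_def by auto
  next
    fix x y assume xy: "x \<in> insert q D" "y \<in> insert q D" "x < y"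
    have below: "\<And>z. z \<in> D \<Longrightarrow> relp h g p z q"
    proof -
      fix z assume z: "z \<in> D"
      show "relp h g p z q"
      proof (cases "z = r")
        case True then show ?thesis using relrq by simp
      next
        case False
        then have "z < r" using D(1) z unfolding chainq_def by force
        then have "relp h g p z r" using D(1) z unfolding chainq_def by blast
        then show ?thesis using relrq relp_trans by blast
      qed
    qed
    show "relp h g p x y"
    proof (cases "y = q")
      case True
      then have "x \<in> D" using xy by auto
      then show ?thesis using below True by simp
    next
      case False
      then have yD: "y \<in> D" using xy by auto
      then have "y \<le> r" using D(1) unfolding chainq_def by auto
      then have "x \<noteq> q" using xy rq by auto
      then have "x \<in> D" using xy by auto
      then show ?thesis using D(1) yD xy(3) unfolding chainq_def by blast
    qed
  qed
  then have "card (insert q D) \<le> ht h g n p q" by (rule ht_ge)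
  then have "ht h g n p r + 1 \<le> ht h g n p q" using D(2) qD finD by simp
  then show ?thesis using ge relrq rn by (intro exI[of _ r]) auto
qed

lemma ht_all:
  assumes "q < n" "1 \<le> j" "j \<le> ht h g n p q"
  shows "\<exists>r. (r = q \<or> relp h g p r q) \<and> r < n \<and> ht h g n p r = j"
  using assms
proof (induction "ht h g n p q - j" arbitrary: q)
  case 0
  then show ?case by (intro exI[of _ q]) auto
next
  case (Suc x)
  have "2 \<le> ht h g n p q" using Suc.hyps(2) Suc.prems by linarith
  then obtain r where r: "relp h g p r q" "r < n" "ht h g n p r = ht h g n p q - 1"
    using ht_step[of q n h g p] Suc.prems(1) by blast
  have "x = ht h g n p r - j" using Suc.hyps(2) r(3) by simp
  then obtain s where s: "(s = r \<or> relp h g p s r)" "s < n" "ht h g n p s = j"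
  proof -
    have "j \<le> ht h g n p r" using r(3) Suc.hyps(2) by linarith
    then show ?thesis using Suc.hyps(1)[of r] \<open>x = ht h g n p r - j\<close> r(2) Suc.prems(2) that by blast
  qed
  then have "relp h g p s q" using r(1) relp_trans by blast
  then show ?case using s by blast
qed

lemma ramsey_nat:
  fixes h L :: nat
  shows "\<exists>N. \<forall>U (\<phi>::nat \<Rightarrow> nat \<Rightarrow> nat set). finite U \<and> N \<le> card U \<and> (\<forall>x y. \<phi> x y \<subseteq> {..<h}) \<longrightarrow>
     (\<exists>H\<subseteq>U. card H = L \<and> (\<forall>x\<in>H. \<forall>y\<in>H. \<forall>x'\<in>H. \<forall>y'\<in>H. x < y \<longrightarrow> x' < y' \<longrightarrow> \<phi> x y = \<phi> x' y'))"
proof -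
  define qs where "qs = replicate (2^h) L"
  obtain N :: nat where N: "partn_lst {..<N} qs 2" using ramsey_full[of qs 2] by blast
  obtain cd where cd: "bij_betw cd (Pow {..<h}) {..<(2::nat)^h}"
    using finite_same_card_bij[of "Pow {..<h}" "{..<(2::nat)^h}"] by (auto simp: card_Pow)
  show ?thesis
  proof (intro exI[of _ N] allI impI)
    fix U :: "nat set" and \<phi> :: "nat \<Rightarrow> nat \<Rightarrow> nat set"
    assume A: "finite U \<and> N \<le> card U \<and> (\<forall>x y. \<phi> x y \<subseteq> {..<h})"
    obtain U0 where U0: "U0 \<subseteq> U" "card U0 = N" "finite U0"
      using A obtain_subset_with_card_n by metis
    obtain e :: "nat \<Rightarrow> nat" where e: "bij_betw e {0..<N} U0" using ex_bij_betw_nat_finite[OF U0(3)] U0(2) by auto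
    define f where "f X = cd (\<phi> (Min (e ` X)) (Max (e ` X)))" for X
    have "f \<in> nsets {..<N} 2 \<rightarrow> {..<length qs}"
      using cd A unfolding f_def qs_def bij_betw_def by auto
    then obtain i H' where i: "i < length qs" "H' \<in> nsets {..<N} (qs!i)" "f ` (nsets H' 2) \<subseteq> {i}"
      using partn_lstE[OF N] by blast
    have qi: "qs ! i = L" using i(1) unfolding qs_def by simp
    have H'sub: "H' \<subseteq> {..<N}" "card H' = L" using i(2) qi unfolding nsets_def by auto
    have inje: "inj_on e {..<N}" using e unfolding bij_betw_def by (simp add: atLeast0LessThan)
    define H where "H = e ` H'"
    have HU: "H \<subseteq> U" unfolding H_def using e H'sub(1) U0(1) unfolding bij_betw_def
      by (auto simp: atLeast0LessThan)
    have cardH: "card H = L" unfolding H_def using H'sub inje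
      by (metis card_image inj_on_subset)
    have key: "cd (\<phi> x y) = i" if xyH: "x \<in> H" "y \<in> H" "x < y" for x y
    proof -
      obtain a b where ab: "a \<in> H'" "b \<in> H'" "x = e a" "y = e b" using xyH(1,2) unfolding H_def by blast
      have "a \<noteq> b" using ab xyH by auto
      then have "{a,b} \<in> nsets H' 2" using ab by simp
      then have "f {a,b} \<in> f ` (nsets H' 2)" by (rule imageI)
      then have "f {a,b} = i" using i(3) by blast
      moreover have "Min (e ` {a,b}) = x" "Max (e ` {a,b}) = y" using ab xyH by auto
      ultimately show ?thesis unfolding f_def by simp
    qed
    have "\<forall>x\<in>H. \<forall>y\<in>H. \<forall>x'\<in>H. \<forall>y'\<in>H. x < y \<longrightarrow> x' < y' \<longrightarrow> \<phi> x y = \<phi> x' y'"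
    proof (intro ballI impI)
      fix x y x' y' assume "x \<in> H" "y \<in> H" "x' \<in> H" "y' \<in> H" "x < y" "x' < y'"
      then have "cd (\<phi> x y) = cd (\<phi> x' y')" using key by simp
      moreover have "\<phi> x y \<in> Pow {..<h}" "\<phi> x' y' \<in> Pow {..<h}" using A by auto
      ultimately show "\<phi> x y = \<phi> x' y'" using cd unfolding bij_betw_def inj_on_def by blast
    qed
    then show "\<exists>H\<subseteq>U. card H = L \<and> (\<forall>x\<in>H. \<forall>y\<in>H. \<forall>x'\<in>H. \<forall>y'\<in>H. x < y \<longrightarrow> x' < y' \<longrightarrow> \<phi> x y = \<phi> x' y')"
      using HU cardH by blast
  qed
qed

definition closedU :: "nat \<Rightarrow> nat \<Rightarrow> (nat \<Rightarrow> nat \<Rightarrow> real) \<Rightarrow> nat set \<Rightarrow> bool" where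
  "closedU n h g U \<longleftrightarrow> (\<forall>p\<in>U. \<forall>q\<in>U. \<forall>r<n. (\<forall>i<h. g i r \<le> g i p \<or> g i r \<le> g i q) \<longrightarrow> r \<in> U)"

definition colr :: "nat \<Rightarrow> (nat \<Rightarrow> nat \<Rightarrow> real) \<Rightarrow> nat \<Rightarrow> nat \<Rightarrow> nat \<Rightarrow> nat set \<Rightarrow> nat" where
  "colr h g n t k T = (Max (ht h g n (Min T) ` (T - {Min T})) - (t - 1)) mod k"

theorem core:
  fixes t k h :: nat
  assumes t2: "t \<ge> 2" and k1: "k \<ge> 1"
  shows "\<exists>m. \<forall>n g U. U \<subseteq> {..<n} \<and> closedU n h g U \<and> m \<le> card U \<longrightarrow>
            (\<forall>j<k. \<exists>T\<subseteq>U. card T = t \<and> colr h g n t k T = j)"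
proof -
  define L where "L = t + k - 1"
  obtain N where N: "\<forall>U (\<phi>::nat \<Rightarrow> nat \<Rightarrow> nat set). finite U \<and> N \<le> card U \<and> (\<forall>x y. \<phi> x y \<subseteq> {..<h}) \<longrightarrow>
     (\<exists>H\<subseteq>U. card H = L \<and> (\<forall>x\<in>H. \<forall>y\<in>H. \<forall>x'\<in>H. \<forall>y'\<in>H. x < y \<longrightarrow> x' < y' \<longrightarrow> \<phi> x y = \<phi> x' y'))"
    using ramsey_nat[of h L] by blast
  show ?thesis
  proof (intro exI[of _ N] allI impI)
    fix n :: nat and g :: "nat \<Rightarrow> nat \<Rightarrow> real" and U :: "nat set" and j :: nat
    assume A: "U \<subseteq> {..<n} \<and> closedU n h g U \<and> N \<le> card U"
    assume jk: "j < k"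
    have finU: "finite U" using A finite_subset by blast
    define \<phi> where "\<phi> x y = {i. i < h \<and> \<not> leo g i y x}" for x y
    have "\<forall>x y. \<phi> x y \<subseteq> {..<h}" unfolding \<phi>_def by auto
    then obtain H where H: "H \<subseteq> U" "card H = L"
      "\<forall>x\<in>H. \<forall>y\<in>H. \<forall>x'\<in>H. \<forall>y'\<in>H. x < y \<longrightarrow> x' < y' \<longrightarrow> \<phi> x y = \<phi> x' y'"
      using N finU A by blast
    have L2: "L \<ge> 2" unfolding L_def using t2 k1 by simp
    have finH: "finite H" using H(1) finU finite_subset by blast
    have Hne: "H \<noteq> {}" using H(2) L2 by auto
    define p where "p = Min H"
    define q where "q = Max H"
    have pH: "p \<in> H" and qH: "q \<in> H" using finH Hne p_def q_def by auto
    have pmin: "\<And>x. x \<in> H \<Longrightarrow> p \<le> x" using finH p_def by simp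
    have qmax: "\<And>x. x \<in> H \<Longrightarrow> x \<le> q" using finH q_def by simp
    have pq: "p < q"
    proof (rule ccontr)
      assume "\<not> p < q"
      then have "H \<subseteq> {p}" using pmin qmax by force
      then have "card H \<le> 1" using card_mono[of "{p}" H] by simp
      then show False using H(2) L2 by simp
    qed
    have qn: "q < n" using qH H(1) A by auto
    define C where "C = H - {p}"
    have chC: "chainq h g n p q C"
      unfolding chainq_def
    proof (intro conjI ballI impI)
      show "C \<subseteq> {..<n}" using H(1) A C_def by auto
      show "q \<in> C" using qH pq C_def by auto
      fix c assume "c \<in> C" then show "c \<le> q" using qmax C_def by auto
    next
      fix x y assume xy: "x \<in> C" "y \<in> C" "x < y"
      have px: "p < x" using xy pmin C_def by force
      have "leo g i x p \<or> leo g i x y" if ih: "i < h" for i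
      proof (cases "i \<in> \<phi> x y")
        case True
        then show ?thesis unfolding \<phi>_def using leo_total by blast
      next
        case False
        then have "i \<notin> \<phi> p x" using H(3) pH xy px C_def by (metis DiffD1)
        then show ?thesis unfolding \<phi>_def using ih by blast
      qed
      then show "relp h g p x y" unfolding relp_def using px xy by blast
    qed
    have cardC: "card C = L - 1" using C_def pH finH H(2) by simp
    have htq: "t + k - 2 \<le> ht h g n p q" using ht_ge[OF chC] cardC L_def by simp
    define n0 where "n0 = t - 1 + j"
    obtain r0 where r0: "(r0 = q \<or> relp h g p r0 q)" "r0 < n" "ht h g n p r0 = n0"
    proof -
      have "1 \<le> n0" "n0 \<le> ht h g n p q" using htq n0_def jk t2 by auto
      then show ?thesis using ht_all[OF qn, of n0 h g p] that by blast
    qed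
    have "\<forall>i\<in>{1..t-2}. \<exists>r. (r = q \<or> relp h g p r q) \<and> r < n \<and> ht h g n p r = i"
      using ht_all[OF qn] htq k1 by auto
    then obtain gg where gg: "\<forall>i\<in>{1..t-2}. (gg i = q \<or> relp h g p (gg i) q) \<and> gg i < n \<and> ht h g n p (gg i) = i"
      by metis
    have inU: "r \<in> U" if "r = q \<or> relp h g p r q" "r < n" for r
    proof (cases "r = q")
      case True then show ?thesis using qH H(1) by auto
    next
      case False
      then have "\<forall>i<h. leo g i r p \<or> leo g i r q" using that relp_def by blast
      then have "\<forall>i<h. g i r \<le> g i p \<or> g i r \<le> g i q" using leo_real by blast
      then show ?thesis using A pH qH H(1) that(2) unfolding closedU_def by blast
    qed
    have gtp: "p < r" if "r = q \<or> relp h g p r q" for r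
      using that pq relp_def by auto
    define R where "R = insert r0 (gg ` {1..t-2})"
    define T where "T = insert p R"
    have RU: "R \<subseteq> U" unfolding R_def using inU r0 gg by auto
    have Rp: "\<forall>r\<in>R. p < r" unfolding R_def using gtp r0 gg by auto
    have pR: "p \<notin> R" using Rp by auto
    have injg: "inj_on gg {1..t-2}"
      by (rule inj_onI) (metis gg)
    have r0g: "r0 \<notin> gg ` {1..t-2}"
    proof
      assume "r0 \<in> gg ` {1..t-2}"
      then obtain i where "i \<in> {1..t-2}" "r0 = gg i" by auto
      then have "ht h g n p r0 = i" using gg by auto
      then show False using r0(3) n0_def \<open>i \<in> {1..t-2}\<close> by auto
    qed
    have cardR: "card R = t - 1" unfolding R_def using r0g injg card_image t2
      by (simp add: card_image)
    have finR: "finite R" unfolding R_def by simp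
    have cardT: "card T = t" unfolding T_def using pR finR cardR t2 by simp
    have TU: "T \<subseteq> U" unfolding T_def using RU pH H(1) by auto
    have minT: "Min T = p"
      unfolding T_def using finR Rp by (intro Min_eqI) auto
    have TR: "T - {Min T} = R" using minT pR T_def by auto
    have imgg: "ht h g n p ` (gg ` {1..t-2}) = {1..t-2}"
    proof -
      have "ht h g n p ` (gg ` {1..t-2}) = (\<lambda>i. i) ` {1..t-2}"
        unfolding image_comp using gg by (intro image_cong) auto
      then show ?thesis by simp
    qed
    have imR: "ht h g n p ` R = insert n0 {1..t-2}" unfolding R_def using imgg r0(3) by simp
    have maxR: "Max (insert n0 {1..t-2}) = n0"
      using n0_def t2 by (intro Max_eqI) auto
    have "colr h g n t k T = j"
      unfolding colr_def TR using minT imR maxR n0_def jk by simp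
    then show "\<exists>T\<subseteq>U. card T = t \<and> colr h g n t k T = j" using TU cardT by blast
  qed
qed


lemma dotd_add: "dotd d a (\<lambda>i. x i + v i) = dotd d a x + dotd d a v"
  unfolding dotd_def by (simp add: distrib_left sum.distrib)

lemma translate_half:
  assumes "v \<in> Rspace d"
  shows "translate v {x \<in> Rspace d. dotd d a x \<le> b} = {x \<in> Rspace d. dotd d a x \<le> b + dotd d a v}"
proof
  show "translate v {x \<in> Rspace d. dotd d a x \<le> b} \<subseteq> {x \<in> Rspace d. dotd d a x \<le> b + dotd d a v}"
    unfolding translate_def using assms by (auto simp: dotd_add Rspace_def)
next
  show "{x \<in> Rspace d. dotd d a x \<le> b + dotd d a v} \<subseteq> translate v {x \<in> Rspace d. dotd d a x \<le> b}"
  proof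
    fix y assume y: "y \<in> {x \<in> Rspace d. dotd d a x \<le> b + dotd d a v}"
    define x where "x = (\<lambda>i. y i - v i)"
    have "y = (\<lambda>i. x i + v i)" unfolding x_def by simp
    moreover have "x \<in> Rspace d" using y assms unfolding x_def Rspace_def by auto
    moreover have "dotd d a x \<le> b" using y dotd_add[of d a x v] \<open>y = (\<lambda>i. x i + v i)\<close> by simp
    ultimately show "y \<in> translate v {x \<in> Rspace d. dotd d a x \<le> b}"
      unfolding translate_def by blast
  qed
qed


theorem theorem4:
  fixes t k h :: nat
  assumes "t \<ge> 2" and "k \<ge> 1" and "h \<ge> 1"
  shows "\<exists>m::nat. \<forall>d::nat. \<forall>Hs :: nat \<Rightarrow> (nat \<Rightarrow> real) set.
    (\<forall>i<h. is_halfspace d (Hs i)) \<longrightarrow>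
    (\<forall>S. finite S \<and> S \<subseteq> Rspace d \<longrightarrow>
      (\<exists>c :: (nat \<Rightarrow> real) set \<Rightarrow> nat.
         (\<forall>T. T \<subseteq> S \<and> card T = t \<longrightarrow> c T < k) \<and>
         (\<forall>R. is_region d h Hs R \<and> card (R \<inter> S) \<ge> m \<longrightarrow>
            (\<forall>j<k. \<exists>T. T \<subseteq> R \<inter> S \<and> card T = t \<and> c T = j))))"
  proof -
  obtain m where m: "\<forall>n g U. U \<subseteq> {..<n} \<and> closedU n h g U \<and> m \<le> card U \<longrightarrow>
            (\<forall>j<k. \<exists>T\<subseteq>U. card T = t \<and> colr h g n t k T = j)"
    using core[OF assms(1,2), of h] by blast
  show ?thesis
  proof (intro exI[of _ m] allI impI)
    fix d :: nat and Hs :: "nat \<Rightarrow> (nat \<Rightarrow> real) set" and S :: "(nat \<Rightarrow> real) set"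
    assume hs: "\<forall>i<h. is_halfspace d (Hs i)"
    assume SA: "finite S \<and> S \<subseteq> Rspace d"
    have "\<forall>i. \<exists>ab. i < h \<longrightarrow> fst ab \<in> Rspace d \<and> Hs i = {x \<in> Rspace d. dotd d (fst ab) x \<le> snd ab}"
      using hs unfolding is_halfspace_def by fastforce
    then obtain ab where ab: "\<And>i. i < h \<Longrightarrow> Hs i = {x \<in> Rspace d. dotd d (fst (ab i)) x \<le> snd (ab i)}"
      by metis
    define a where "a i = fst (ab i)" for i
    define b where "b i = snd (ab i)" for i
    have Hsi: "\<And>i. i < h \<Longrightarrow> Hs i = {x \<in> Rspace d. dotd d (a i) x \<le> b i}"
      using ab a_def b_def by simp
    define n where "n = card S"
    obtain e where e: "bij_betw e {0..<n} S" using ex_bij_betw_nat_finite SA n_def by blast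
    define f where "f = the_inv_into {0..<n} e"
    have fbij: "bij_betw f S {0..<n}" unfolding f_def by (rule bij_betw_the_inv_into[OF e])
    have ef: "\<And>y. y \<in> S \<Longrightarrow> e (f y) = y" unfolding f_def using e f_the_inv_into_f_bij_betw by metis
    have fe: "\<And>x. x < n \<Longrightarrow> f (e x) = x" unfolding f_def using e
      by (metis atLeastLessThan_iff bij_betw_def the_inv_into_f_f zero_le)
    have eS: "\<And>x. x < n \<Longrightarrow> e x \<in> S" using e unfolding bij_betw_def by auto
    define g where "g i x = dotd d (a i) (e x)" for i x
    define c where "c T = colr h g n t k (f ` T)" for T
    show "\<exists>c :: (nat \<Rightarrow> real) set \<Rightarrow> nat.
         (\<forall>T. T \<subseteq> S \<and> card T = t \<longrightarrow> c T < k) \<and>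
         (\<forall>R. is_region d h Hs R \<and> card (R \<inter> S) \<ge> m \<longrightarrow>
            (\<forall>j<k. \<exists>T. T \<subseteq> R \<inter> S \<and> card T = t \<and> c T = j))"
    proof (intro exI[of _ c] conjI allI impI)
      fix T assume "T \<subseteq> S \<and> card T = t"
      show "c T < k" unfolding c_def colr_def using assms(2) by simp
    next
      fix R j assume RA: "is_region d h Hs R \<and> m \<le> card (R \<inter> S)" and jk: "j < k"
      obtain F where F: "finite F" "F \<noteq> {}" "\<forall>G\<in>F. \<exists>i<h. \<exists>v\<in>Rspace d. G = translate v (Hs i)" "R = \<Inter>F"
        using RA unfolding is_region_def by blast
      define U where "U = f ` (R \<inter> S)"
      have Usub: "U \<subseteq> {..<n}" unfolding U_def using fbij unfolding bij_betw_def by auto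
      have injf: "inj_on f (R \<inter> S)" using fbij unfolding bij_betw_def by (meson inf_le2 inj_on_subset)
      have cardU: "card U = card (R \<inter> S)" unfolding U_def using injf by (simp add: card_image)
      have clo: "closedU n h g U" unfolding closedU_def
      proof (intro ballI allI impI)
        fix p q r assume pU: "p \<in> U" and qU: "q \<in> U" and rn: "r < n"
          and ineq: "\<forall>i<h. g i r \<le> g i p \<or> g i r \<le> g i q"
        obtain p' where p': "p' \<in> R \<inter> S" "p = f p'" using pU U_def by auto
        obtain q' where q': "q' \<in> R \<inter> S" "q = f q'" using qU U_def by auto
        have ep: "e p = p'" using p' ef by auto
        have eq: "e q = q'" using q' ef by auto
        have "e r \<in> G" if GF: "G \<in> F" for G
        proof -
          obtain i v where iv: "i < h" "v \<in> Rspace d" "G = translate v (Hs i)" using F(3) GF by blast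
          have Geq: "G = {x \<in> Rspace d. dotd d (a i) x \<le> b i + dotd d (a i) v}"
            using iv Hsi translate_half by simp
          have "p' \<in> G" "q' \<in> G" using p' q' F(4) GF by auto
          then have "dotd d (a i) (e p) \<le> b i + dotd d (a i) v" "dotd d (a i) (e q) \<le> b i + dotd d (a i) v"
            using Geq ep eq by auto
          moreover have "dotd d (a i) (e r) \<le> dotd d (a i) (e p) \<or> dotd d (a i) (e r) \<le> dotd d (a i) (e q)"
            using ineq iv(1) g_def by auto
          moreover have "e r \<in> Rspace d" using eS rn SA by auto
          ultimately show ?thesis using Geq by auto
        qed
        then have "e r \<in> R \<inter> S" using F(4) eS rn by auto
        then show "r \<in> U" unfolding U_def using fe rn by force
      qed
      obtain T' where T': "T' \<subseteq> U" "card T' = t" "colr h g n t k T' = j"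
        using m Usub clo cardU RA jk by metis
      define T where "T = e ` T'"
      have T'n: "T' \<subseteq> {..<n}" using T' Usub by auto
      have inje: "inj_on e T'" using e T'n unfolding bij_betw_def
        by (metis atLeast0LessThan inj_on_subset)
      have "T \<subseteq> R \<inter> S" unfolding T_def using T'(1) U_def ef by auto
      moreover have "card T = t" unfolding T_def using inje T'(2) by (simp add: card_image)
      moreover have "f ` T = T'" unfolding T_def image_comp using fe T'n
        by (simp add: subset_eq)
      ultimately show "\<exists>T. T \<subseteq> R \<inter> S \<and> card T = t \<and> c T = j" using c_def T'(3) by metis
    qed
  qed
qed

end
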